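(* For $n\ge 0$, \begin{align*} (\mathfrak C_2+\mathfrak C_2)^n&=\frac{(2n)!}{30}\sum_{l=0}^{n}\frac{(-1)^{n-l}(10n-8l+5)(2n-2l-3)!!}{2^{n-l}(n-l)!\,(2l)!}\mathfrak C_{2l+4}\\ &\quad-\frac{(2n)!}{3}\sum_{l=0}^{n}\frac{(-1)^{n-l}(6l+1)(2n-2l+1)!!}{2^{n-l}(n-l)!\,(2l)!}\mathfrak C_{2l+2}\\ &\quad-\frac{(2n)!}{30}\sum_{l=0}^{n}\frac{(-1)^{n-l}(160l^3-220l^2+72l-1)(2n-2l+1)!!}{2^{n-l}(n-l)!\,(2l)!}\mathfrak C_{2l}. \end{align*}
   Context: The numbers $\mathfrak C_{2n}$ (Cauchy numbers with level $2$) are defined by $\frac{t}{{\rm arcsinh}\,t}=\sum_{n=0}^\infty\mathfrak C_{2n}\frac{t^{2n}}{(2n)!}$. Convolution notation: $(\mathfrak C_{2j_1}+\cdots+\mathfrak C_{2j_k})^n:=\sum_{i_1+\cdots+i_k=n,\ i_1,\dots,i_k\ge0}\frac{(2n)!}{(2i_1)!\cdots(2i_k)!}\mathfrak C_{2i_1+2j_1}\cdots\mathfrak C_{2i_k+2j_k}$. Double factorials: $(2i-1)!!=(2i-1)(2i-3)\cdots1$ for $i\ge1$, $(-1)!!=1$, and $(-(2i+1))!!=\frac{(-1)^i}{(2i-1)!!}$ for $i\ge1$. *)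

theory Defs
  imports Complex_Main "HOL-Computational_Algebra.Formal_Power_Series"
begin

definition sinh_fps :: "real fps" where
  "sinh_fps = fps_const (1/2) * (fps_exp 1 - fps_exp (-1))"

definition arcsinh_fps :: "real fps" where
  "arcsinh_fps = fps_inv sinh_fps"

text \<open>t / arcsinh t = 1 / (arcsinh t / t); arcsinh t / t is the shift of arcsinh_fps.
  Cauchy numbers with level 2: t / arcsinh t = sum C_{2n} t^{2n} / (2n)!.
  cauchy2 n denotes C_{2n}.\<close>
definition cauchy2 :: "nat \<Rightarrow> real" where
  "cauchy2 n = fact (2*n) * fps_nth (inverse (fps_shift 1 arcsinh_fps)) (2*n)"

text \<open>Double factorial of an odd integer m, with (-1)!! = 1 and
  (-(2i+1))!! = (-1)^i / (2i-1)!! for i \<ge> 1.\<close>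
definition odd_dfact :: "int \<Rightarrow> real" where
  "odd_dfact m =
     (if m \<ge> -1 then (\<Prod>j\<in>{1..nat ((m+1) div 2)}. real (2*j - 1))
      else (let i = nat ((-m-1) div 2) in
              (-1)^i / (\<Prod>j\<in>{1..i}. real (2*j - 1))))"

text \<open>(C_{2j1} + C_{2j2})^n convolution.\<close>
definition cauchy2_conv2 :: "nat \<Rightarrow> nat \<Rightarrow> nat \<Rightarrow> real" where
  "cauchy2_conv2 j1 j2 n =
     (\<Sum>i\<le>n. fact (2*n) / (fact (2*i) * fact (2*(n-i)))
               * cauchy2 (i + j1) * cauchy2 ((n-i) + j2))"

end

theory Submission
  imports Defs
begin

unbundle fps_syntax

lemma key_alg:
  fixes X y w h0 h1 h2 h3 h4 h5 :: "'a::idom"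
  assumes rel: "w^2*(1+X^2) = 1"
    and q0: "y*h0 = X"
    and q1: "y^2*h1 = (- X * w + y)"
    and q2: "y^3*h2 = (X^2 * y * w^3 + 2 * X * w^2 - 2 * y * w)"
    and q3: "y^4*h3 = (- 3 * X^3 * y^2 * w^5 - 6 * X^2 * y * w^4 + 4 * X * y^2 * w^3 - 6 * X * w^3 + 6 * y * w^2)"
    and q4: "y^5*h4 = (15 * X^4 * y^3 * w^7 + 30 * X^3 * y^2 * w^6 - 21 * X^2 * y^3 * w^5 + 36 * X^2 * y * w^5 - 32 * X * y^2 * w^4 + 24 * X * w^4 + 4 * y^3 * w^3 - 24 * y * w^3)"
    and q5: "y^6*h5 = (- 105 * X^5 * y^4 * w^9 - 210 * X^4 * y^3 * w^8 + 165 * X^3 * y^4 * w^7 - 270 * X^3 * y^2 * w^7 + 260 * X^2 * y^3 * w^6 - 240 * X^2 * y * w^6 - 54 * X * y^4 * w^5 + 240 * X * y^2 * w^5 - 120 * X * w^5 - 40 * y^3 * w^4 + 120 * y * w^4)"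
  shows "y^6 * (30 * (h2*h2)) = y^6 * (5*h4*(X*(-(2*X*w - (1+X^2)*X*w^3))) + (X*h5)*(-((1+X^2)*w)) + 5*h4*(-((1+X^2)*w))
      - 10*((3*(X*h3)+h2)*w^3)
      - (20*(X*h1 + 3*X^2*h2 + X^3*h3) - 55*(X*h1 + X^2*h2) + 36*(X*h1) - h0)*w^3)"
proof -
  let ?R = "(180 * X^6 * y^4 * w^8 + 360 * X^5 * y^3 * w^7 - 255 * X^4 * y^4 * w^6 + 450 * X^4 * y^2 * w^6 - 390 * X^3 * y^3 * w^5 + 360 * X^3 * y * w^5 + 49 * X^2 * y^4 * w^4 - 360 * X^2 * y^2 * w^4 + 120 * X^2 * w^4 - 240 * X * y * w^3 + 120 * y^2 * w^2)"
  have z: "X^2*w^2 + w^2 - 1 = 0" using rel by (simp add: algebra_simps)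
  have "y^6 * (5*h4*(X*(-(2*X*w - (1+X^2)*X*w^3))) + (X*h5)*(-((1+X^2)*w)) + 5*h4*(-((1+X^2)*w))
      - 10*((3*(X*h3)+h2)*w^3)
      - (20*(X*h1 + 3*X^2*h2 + X^3*h3) - 55*(X*h1 + X^2*h2) + 36*(X*h1) - h0)*w^3)
    = 5*(X*(-(2*X*w - (1+X^2)*X*w^3)))*y*(y^5*h4) + X*(-((1+X^2)*w))*(y^6*h5) + 5*(-((1+X^2)*w))*y*(y^5*h4)
      - 10*w^3*(3*X*y^2*(y^4*h3) + y^3*(y^3*h2))
      - w^3*(20*(X*y^4*(y^2*h1) + 3*X^2*y^3*(y^3*h2) + X^3*y^2*(y^4*h3)) - 55*(X*y^4*(y^2*h1) + X^2*y^3*(y^3*h2)) + 36*X*y^4*(y^2*h1) - y^5*(y*h0))"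
    by algebra
  also have "\<dots> = 30 * (y^3*h2)^2 + (X^2*w^2 + w^2 - 1) * ?R"
    unfolding q0 q1 q2 q3 q4 q5 by algebra
  also have "\<dots> = y^6 * (30 * (h2*h2))" unfolding z by algebra
  finally show ?thesis by (rule sym)
qed


definition cosh_fps :: "real fps" where
  "cosh_fps = fps_const (1/2) * (fps_exp 1 + fps_exp (-1))"

lemma sinh0: "sinh_fps $ 0 = 0" and sinh1: "sinh_fps $ 1 = 1" and sinh1': "sinh_fps $ Suc 0 = 1"
  by (simp_all add: sinh_fps_def)

lemma deriv_sinh: "fps_deriv sinh_fps = cosh_fps"
  by (simp add: sinh_fps_def cosh_fps_def algebra_simps flip: fps_const_neg)

lemma cosh_sinh: "cosh_fps^2 - sinh_fps^2 = 1"
proof -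
  have e: "fps_exp (1::real) * fps_exp (-1) = 1"
    by (metis fps_exp_add_mult add.right_inverse fps_exp_0)
  have c: "fps_const (1/2::real) * fps_const (1/2) * 4 = 1"
    by (simp add: fps_numeral_fps_const fps_const_mult[symmetric])
  have "cosh_fps^2 - sinh_fps^2 = fps_const (1/2) * fps_const (1/2) * 4 * (fps_exp 1 * fps_exp (-1))"
    unfolding cosh_fps_def sinh_fps_def by (simp add: power2_eq_square algebra_simps)
  then show ?thesis using e c by simp
qed

definition "yy = arcsinh_fps"
definition "ww = fps_deriv yy"

lemma yy0: "yy $ 0 = 0" and yy1: "yy $ 1 = 1"
  by (simp_all add: yy_def arcsinh_fps_def fps_inv_def sinh1 sinh1')

lemma ww0: "ww $ 0 = 1"
  using yy1 by (simp add: ww_def)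

lemma sinh_yy: "sinh_fps oo yy = fps_X"
  unfolding yy_def arcsinh_fps_def by (rule fps_inv_right) (simp_all add: sinh0 sinh1 sinh1')

lemma cosh_ww: "(cosh_fps oo yy) * ww = 1"
proof -
  have "fps_deriv (sinh_fps oo yy) = (cosh_fps oo yy) * ww"
    using fps_compose_deriv[of yy sinh_fps] yy0 by (simp add: deriv_sinh ww_def)
  then show ?thesis using sinh_yy by simp
qed

lemma cosh_sq: "(cosh_fps oo yy)^2 = 1 + fps_X^2"
proof -
  have "(cosh_fps^2 - sinh_fps^2) oo yy = 1" using cosh_sinh by simp
  then have "(cosh_fps oo yy)^2 - (sinh_fps oo yy)^2 = 1"
    by (simp add: fps_compose_sub_distrib fps_compose_power yy0)
  then show ?thesis using sinh_yy by (simp add: algebra_simps)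
qed

lemma rel: "ww^2 * (1 + fps_X^2) = 1"
proof -
  have "ww^2 * (1 + fps_X^2) = ((cosh_fps oo yy) * ww)^2"
    by (simp add: cosh_sq power_mult_distrib algebra_simps)
  then show ?thesis using cosh_ww by simp
qed

lemma ww_deriv: "fps_deriv ww = - fps_X * ww^3"
proof -
  have "fps_deriv (ww^2 * (1 + fps_X^2)) = 0" using rel by simp
  then have d: "2 * ww * fps_deriv ww * (1 + fps_X^2) + ww^2 * (2 * fps_X) = 0"
    by (simp add: fps_deriv_power' algebra_simps)
  have "fps_deriv ww = fps_deriv ww * (ww^2 * (1 + fps_X^2))" using rel by simp
  also have "\<dots> = ww * (ww * fps_deriv ww * (1 + fps_X^2))" by (simp add: algebra_simps power2_eq_square)
  also have "ww * fps_deriv ww * (1 + fps_X^2) = -(ww^2 * fps_X)"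
  proof -
    have "2 * (ww * fps_deriv ww * (1 + fps_X^2) + ww^2 * fps_X) = 0" using d by (simp add: algebra_simps)
    then have "ww * fps_deriv ww * (1 + fps_X^2) + ww^2 * fps_X = 0"
      by (metis mult_eq_0_iff zero_neq_numeral)
    then show ?thesis by (simp add: algebra_simps eq_neg_iff_add_eq_0)
  qed
  finally show ?thesis by (simp add: algebra_simps power2_eq_square power3_eq_cube)
qed



definition "uu = fps_shift 1 yy"
definition "BB = inverse uu"
definition "HH k = (fps_deriv ^^ k) BB"

lemma yy_eq: "yy = fps_X * uu"
  by (rule fps_ext) (simp add: uu_def yy0)

lemma yy1': "yy $ Suc 0 = 1" using yy1 by simp

lemma uu0: "uu $ 0 = 1" by (simp add: uu_def yy1')

lemma q0: "yy * HH 0 = fps_X"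
proof -
  have "uu * BB = 1" unfolding BB_def by (rule inverse_mult_eq_1') (simp add: uu0)
  then show ?thesis by (simp add: HH_def yy_eq mult.assoc)
qed

lemma HH_Suc: "HH (Suc k) = fps_deriv (HH k)" by (simp add: HH_def)

lemma step:
  assumes "yy^(k+1) * HH k = q"
  shows "yy^(k+2) * HH (Suc k) = yy * fps_deriv q - of_nat (k+1) * ww * q"
proof -
  define p where "p = yy^k"
  have dp: "fps_deriv (yy^(k+1)) = of_nat (k+1) * ww * p"
    unfolding fps_deriv_power' ww_def p_def by simp
  have a: "yy^(k+1) = yy*p" "yy^(k+2) = yy*yy*p" by (simp_all add: p_def)
  have "fps_deriv (yy^(k+1) * HH k) = fps_deriv q" using assms by simp
  then have "fps_deriv (yy^(k+1)) * HH k + yy^(k+1) * fps_deriv (HH k) = fps_deriv q"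
    by (simp only: fps_deriv_mult add.commute)
  then have eq0: "of_nat (k+1) * ww * p * HH k + yy^(k+1) * HH (Suc k) = fps_deriv q"
    by (simp only: dp HH_Suc)
  then have eq: "of_nat (k+1) * ww * p * HH k + yy * p * HH (Suc k) = fps_deriv q"
    by (subst (asm) a(1))
  have as: "yy * p * HH k = q" using assms unfolding a(1) .
  have "yy * fps_deriv q - of_nat (k+1) * ww * q
     = yy * (of_nat (k+1) * ww * p * HH k + yy * p * HH (Suc k)) - of_nat (k+1) * ww * (yy * p * HH k)"
    by (simp only: eq as)
  also have "\<dots> = yy * yy * p * HH (Suc k)" by (simp add: algebra_simps)
  finally show ?thesis unfolding a(2) by simp
qed

lemma step3:
  assumes "yy^m * HH k = q" "m = Suc k" "m' = Suc m" "k' = Suc k" "c = of_nat m"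
  shows "yy^m' * HH k' = yy * fps_deriv q - c * ww * q"
  using step[of k q] assms by simp

lemmas drules = fps_deriv_power' ww_deriv ww_def[symmetric]

lemma q1: "yy^2 * HH 1 = (- fps_X * ww + yy)"
proof -
  have e: "yy^2 * HH 1 = yy * fps_deriv fps_X - 1 * ww * fps_X"
    using step[of 0 fps_X] q0 by (simp add: power2_eq_square)
  show ?thesis unfolding e by simp
qed

lemma q2: "yy^3 * HH 2 = (fps_X^2 * yy * ww^3 + 2 * fps_X * ww^2 - 2 * yy * ww)"
proof -
  have d: "fps_deriv (- fps_X * ww + yy) = (fps_X^2 * ww^3)"
    by (simp add: drules; algebra)
  have e: "yy^3 * HH 2 = yy * fps_deriv (- fps_X * ww + yy) - 2 * ww * (- fps_X * ww + yy)"
    by (rule step3[OF q1]) simp_all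
  show ?thesis unfolding e d by algebra
qed

lemma q3: "yy^4 * HH 3 = (- 3 * fps_X^3 * yy^2 * ww^5 - 6 * fps_X^2 * yy * ww^4 + 4 * fps_X * yy^2 * ww^3 - 6 * fps_X * ww^3 + 6 * yy * ww^2)"
proof -
  have d: "fps_deriv (fps_X^2 * yy * ww^3 + 2 * fps_X * ww^2 - 2 * yy * ww) = (- 3 * fps_X^3 * yy * ww^5 - 3 * fps_X^2 * ww^4 + 4 * fps_X * yy * ww^3)"
    by (simp add: drules; algebra)
  have e: "yy^4 * HH 3 = yy * fps_deriv (fps_X^2 * yy * ww^3 + 2 * fps_X * ww^2 - 2 * yy * ww) - 3 * ww * (fps_X^2 * yy * ww^3 + 2 * fps_X * ww^2 - 2 * yy * ww)"
    by (rule step3[OF q2]) simp_all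
  show ?thesis unfolding e d by algebra
qed

lemma q4: "yy^5 * HH 4 = (15 * fps_X^4 * yy^3 * ww^7 + 30 * fps_X^3 * yy^2 * ww^6 - 21 * fps_X^2 * yy^3 * ww^5 + 36 * fps_X^2 * yy * ww^5 - 32 * fps_X * yy^2 * ww^4 + 24 * fps_X * ww^4 + 4 * yy^3 * ww^3 - 24 * yy * ww^3)"
proof -
  have d: "fps_deriv (- 3 * fps_X^3 * yy^2 * ww^5 - 6 * fps_X^2 * yy * ww^4 + 4 * fps_X * yy^2 * ww^3 - 6 * fps_X * ww^3 + 6 * yy * ww^2) = (15 * fps_X^4 * yy^2 * ww^7 + 18 * fps_X^3 * yy * ww^6 - 21 * fps_X^2 * yy^2 * ww^5 + 12 * fps_X^2 * ww^5 - 16 * fps_X * yy * ww^4 + 4 * yy^2 * ww^3)"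
    by (simp add: drules; algebra)
  have e: "yy^5 * HH 4 = yy * fps_deriv (- 3 * fps_X^3 * yy^2 * ww^5 - 6 * fps_X^2 * yy * ww^4 + 4 * fps_X * yy^2 * ww^3 - 6 * fps_X * ww^3 + 6 * yy * ww^2) - 4 * ww * (- 3 * fps_X^3 * yy^2 * ww^5 - 6 * fps_X^2 * yy * ww^4 + 4 * fps_X * yy^2 * ww^3 - 6 * fps_X * ww^3 + 6 * yy * ww^2)"
    by (rule step3[OF q3]) simp_all
  show ?thesis unfolding e d by algebra
qed

lemma q5: "yy^6 * HH 5 = (- 105 * fps_X^5 * yy^4 * ww^9 - 210 * fps_X^4 * yy^3 * ww^8 + 165 * fps_X^3 * yy^4 * ww^7 - 270 * fps_X^3 * yy^2 * ww^7 + 260 * fps_X^2 * yy^3 * ww^6 - 240 * fps_X^2 * yy * ww^6 - 54 * fps_X * yy^4 * ww^5 + 240 * fps_X * yy^2 * ww^5 - 120 * fps_X * ww^5 - 40 * yy^3 * ww^4 + 120 * yy * ww^4)"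
proof -
  have d: "fps_deriv (15 * fps_X^4 * yy^3 * ww^7 + 30 * fps_X^3 * yy^2 * ww^6 - 21 * fps_X^2 * yy^3 * ww^5 + 36 * fps_X^2 * yy * ww^5 - 32 * fps_X * yy^2 * ww^4 + 24 * fps_X * ww^4 + 4 * yy^3 * ww^3 - 24 * yy * ww^3) = (- 105 * fps_X^5 * yy^3 * ww^9 - 135 * fps_X^4 * yy^2 * ww^8 + 165 * fps_X^3 * yy^3 * ww^7 - 120 * fps_X^3 * yy * ww^7 + 155 * fps_X^2 * yy^2 * ww^6 - 60 * fps_X^2 * ww^6 - 54 * fps_X * yy^3 * ww^5 + 80 * fps_X * yy * ww^5 - 20 * yy^2 * ww^4)"
    by (simp add: drules; algebra)
  have e: "yy^6 * HH 5 = yy * fps_deriv (15 * fps_X^4 * yy^3 * ww^7 + 30 * fps_X^3 * yy^2 * ww^6 - 21 * fps_X^2 * yy^3 * ww^5 + 36 * fps_X^2 * yy * ww^5 - 32 * fps_X * yy^2 * ww^4 + 24 * fps_X * ww^4 + 4 * yy^3 * ww^3 - 24 * yy * ww^3) - 5 * ww * (15 * fps_X^4 * yy^3 * ww^7 + 30 * fps_X^3 * yy^2 * ww^6 - 21 * fps_X^2 * yy^3 * ww^5 + 36 * fps_X^2 * yy * ww^5 - 32 * fps_X * yy^2 * ww^4 + 24 * fps_X * ww^4 + 4 * yy^3 * ww^3 - 24 * yy * ww^3)"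
    by (rule step3[OF q4]) simp_all
  show ?thesis unfolding e d by algebra
qed



lemma rec_coeff:
  fixes F :: "real fps"
  assumes h: "fps_deriv F * (1 + fps_X^2) = fps_const a * fps_X * F"
  shows "F $ 1 = 0" and "real (n+2) * F$(n+2) = (a - real n) * F$n"
proof -
  have e: "(fps_deriv F * (1 + fps_X^2)) $ m = (fps_const a * fps_X * F) $ m" for m
    using h by simp
  have l: "(fps_deriv F * (1 + fps_X^2)) $ m = (fps_deriv F) $ m + (if m < 2 then 0 else (fps_deriv F) $ (m-2))" for m
    by (simp add: distrib_left mult.commute[of "fps_deriv F"] fps_X_power_mult_nth)
  have r: "(fps_const a * fps_X * F) $ m = (if m = 0 then 0 else a * F $ (m-1))" for m
    by (simp add: mult.assoc)
  show "F $ 1 = 0" using e[of 0] l[of 0] r[of 0] by simp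
  show "real (n+2) * F$(n+2) = (a - real n) * F$n"
  proof (cases n)
    case 0
    then show ?thesis using e[of 1] l[of 1] r[of 1] by (simp add: numeral_eq_Suc)
  next
    case (Suc p)
    have "real (p+3) * F$(p+3) + real (p+1) * F$(p+1) = a * F$(p+1)"
      using e[of "p+2"] l[of "p+2"] r[of "p+2"] by (simp add: numeral_eq_Suc algebra_simps)
    then show ?thesis using Suc by (simp add: numeral_eq_Suc algebra_simps)
  qed
qed

lemma rec_odd:
  fixes F :: "real fps"
  assumes h: "fps_deriv F * (1 + fps_X^2) = fps_const a * fps_X * F"
  shows "F $ (2*k+1) = 0"
proof (induction k)
  case 0 then show ?case using rec_coeff(1)[OF h] by simp
next
  case (Suc k)
  have "real (2*k+1+2) * F$(2*k+1+2) = (a - real (2*k+1)) * F$(2*k+1)" by (rule rec_coeff(2)[OF h])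
  then have "F$(2*k+1+2) = 0" using Suc by simp
  then show ?case by (simp add: algebra_simps)
qed

lemma rec_even:
  fixes F :: "real fps"
  assumes h: "fps_deriv F * (1 + fps_X^2) = fps_const a * fps_X * F"
  shows "F $ (2*(Suc k)) = (a - 2 * real k) / (2 * real k + 2) * F $ (2*k)"
proof -
  have "real (2*k+2) * F$(2*k+2) = (a - real (2*k)) * F$(2*k)" by (rule rec_coeff(2)[OF h])
  then show ?thesis by (simp add: field_simps)
qed

lemma ww_ode: "fps_deriv ww * (1 + fps_X^2) = fps_const (-1) * fps_X * ww"
proof -
  have "fps_deriv ww * (1 + fps_X^2) = - fps_X * ww * (ww^2 * (1 + fps_X^2))"
    by (simp add: ww_deriv algebra_simps power2_eq_square power3_eq_cube)
  then show ?thesis by (simp add: rel fps_const_neg[symmetric])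
qed

lemma ww_odd: "ww $ (2*k+1) = 0" by (rule rec_odd[OF ww_ode])

lemma yy_even: "yy $ (2*k) = 0"
proof (cases k)
  case 0 then show ?thesis by (simp add: yy0)
next
  case (Suc p)
  have "ww $ (2*p+1) = real (2*p+2) * yy $ (2*p+2)" by (simp add: ww_def)
  then show ?thesis using ww_odd[of p] Suc by simp
qed

lemma uu_odd: "uu $ (2*k+1) = 0"
  using yy_even[of "Suc k"] by (simp add: uu_def)

definition rho :: "real fps \<Rightarrow> real fps" where
  "rho F = Abs_fps (\<lambda>m. (-1)^m * F $ m)"

lemma rho_mult: "rho (F * G) = rho F * rho G"
proof (rule fps_ext)
  fix m
  have "(rho F * rho G) $ m = (\<Sum>i=0..m. (-1)^m * (F$i * G$(m-i)))"
    unfolding fps_mult_nth rho_def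
    by (intro sum.cong) (auto simp: power_add[symmetric])
  then show "rho (F * G) $ m = (rho F * rho G) $ m"
    by (simp add: rho_def fps_mult_nth sum_distrib_left)
qed

lemma rho_1: "rho 1 = 1" by (rule fps_ext) (simp add: rho_def)

lemma rho_uu: "rho uu = uu"
proof (rule fps_ext)
  fix m show "rho uu $ m = uu $ m"
    by (cases "even m") (auto simp: rho_def elim!: oddE intro: uu_odd)
qed

lemma BB_odd: "BB $ (2*k+1) = 0"
proof -
  have "uu * BB = 1" unfolding BB_def by (rule inverse_mult_eq_1') (simp add: uu0)
  then have "rho uu * rho BB = 1" by (metis rho_mult rho_1)
  then have "rho BB = BB" unfolding rho_uu BB_def by (metis fps_inverse_unique)
  then have "rho BB $ (2*k+1) = BB $ (2*k+1)" by simp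
  then have "BB $ (2*k+1) = - BB $ (2*k+1)" by (simp add: rho_def)
  then show ?thesis by simp
qed



lemma odf_nat: "odd_dfact (2*int k - 1) = (\<Prod>j\<in>{1..k}. real (2*j - 1))"
  by (simp add: odd_dfact_def)

lemma odf_m3: "odd_dfact (-3) = -1"
  by (simp add: odd_dfact_def)

lemma odf_rec: "odd_dfact (2*int k - 1) = (2*real k - 1) * odd_dfact (2*int k - 3)"
proof (cases k)
  case 0 then show ?thesis by (simp add: odf_m3 odd_dfact_def)
next
  case (Suc p)
  have "2*int k - 3 = 2*int p - 1" using Suc by simp
  then have "odd_dfact (2*int k - 3) = (\<Prod>j\<in>{1..p}. real (2*j - 1))" by (simp add: odf_nat)
  moreover have "odd_dfact (2*int k - 1) = (\<Prod>j\<in>{1..p}. real (2*j - 1)) * real (2*(Suc p) - 1)"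
    unfolding odf_nat Suc by (simp add: prod.cl_ivl_Suc)
  ultimately show ?thesis using Suc by (simp add: of_nat_diff algebra_simps)
qed

lemma odf_rec': "odd_dfact (2*int k + 1) = (2*real k + 1) * odd_dfact (2*int k - 1)"
proof -
  have "odd_dfact (2*int (Suc k) - 1) = (2*real (Suc k) - 1) * odd_dfact (2*int (Suc k) - 3)"
    by (rule odf_rec)
  moreover have "2*int (Suc k) - 1 = 2*int k + 1" "2*int (Suc k) - 3 = 2*int k - 1" by simp_all
  ultimately show ?thesis by (simp add: algebra_simps)
qed

definition "TT = ww^3"
definition "PP = - ((1 + fps_X^2) * ww)"

lemma TT_ode: "fps_deriv TT * (1 + fps_X^2) = fps_const (-3) * fps_X * TT"
proof -
  have "fps_deriv TT * (1 + fps_X^2) = -3 * fps_X * ww^3 * (ww^2 * (1 + fps_X^2))"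
    by (simp add: TT_def fps_deriv_power' ww_deriv algebra_simps power2_eq_square power3_eq_cube)
  also have "\<dots> = -3 * fps_X * TT" by (simp only: rel TT_def) simp
  also have "(-3::real fps) = fps_const (-3)" by (simp add: fps_numeral_fps_const)
  finally show ?thesis .
qed

lemma PP_deriv: "fps_deriv PP = - (2 * fps_X * ww - (1 + fps_X^2) * fps_X * ww^3)"
  by (simp add: PP_def ww_deriv algebra_simps power2_eq_square)

lemma PP_ode: "fps_deriv PP * (1 + fps_X^2) = fps_const 1 * fps_X * PP"
proof -
  have "fps_deriv PP * (1 + fps_X^2) = - (2 * fps_X * ww * (1 + fps_X^2) - fps_X * ww * (1 + fps_X^2) * (ww^2 * (1 + fps_X^2)))"
    unfolding PP_deriv by algebra
  also have "\<dots> = - (2 * fps_X * ww * (1 + fps_X^2) - fps_X * ww * (1 + fps_X^2))"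
    by (simp only: rel mult_1_right)
  also have "\<dots> = fps_const 1 * fps_X * PP"
    unfolding PP_def fps_const_1_eq_1 by algebra
  finally show ?thesis .
qed

lemma TT_coeff: "TT $ (2*k) = (-1)^k * odd_dfact (2*int k + 1) / (2^k * fact k)"
proof (induction k)
  case 0 then show ?case by (simp add: TT_def ww0 odd_dfact_def fps_power_zeroth)
next
  case (Suc k)
  have "TT $ (2*Suc k) = (-3 - 2 * real k) / (2 * real k + 2) * TT $ (2*k)"
    using rec_even[OF TT_ode] by simp
  moreover have "odd_dfact (2*int (Suc k) + 1) = (2*real k + 3) * odd_dfact (2*int k + 1)"
    using odf_rec'[of "Suc k"] by (simp add: algebra_simps)
  moreover have "(-1::real)^Suc k * ((2*real k + 3) * odd_dfact (2*int k + 1)) / (2^Suc k * fact (Suc k))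
      = (-3 - 2 * real k) / (2 * real k + 2) * ((-1)^k * odd_dfact (2*int k + 1) / (2^k * fact k))"
    by (simp add: field_simps)
  ultimately show ?case using Suc.IH by simp
qed

lemma PP_coeff: "PP $ (2*k) = (-1)^k * odd_dfact (2*int k - 3) / (2^k * fact k)"
proof (induction k)
  case 0 then show ?case by (simp add: PP_def ww0 odf_m3)
next
  case (Suc k)
  have "PP $ (2*Suc k) = (1 - 2 * real k) / (2 * real k + 2) * PP $ (2*k)"
    using rec_even[OF PP_ode] by simp
  moreover have "odd_dfact (2*int (Suc k) - 3) = (2*real k - 1) * odd_dfact (2*int k - 3)"
    using odf_rec[of k] by simp
  moreover have "(-1::real)^Suc k * ((2*real k - 1) * odd_dfact (2*int k - 3)) / (2^Suc k * fact (Suc k))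
      = (1 - 2 * real k) / (2 * real k + 2) * ((-1)^k * odd_dfact (2*int k - 3) / (2^k * fact k))"
    by (simp add: field_simps)
  ultimately show ?case using Suc.IH by simp
qed



definition theta :: "real fps \<Rightarrow> real fps" where "theta F = fps_X * fps_deriv F"

lemma theta_nth: "theta F $ m = of_nat m * F $ m"
  by (cases m) (simp_all add: theta_def)

lemma num_nth: "(numeral c * (F::real fps)) $ m = numeral c * F $ m"
  by (simp add: fps_numeral_fps_const)

lemma aux: "(c::real) \<noteq> 0 \<Longrightarrow> c * (A / (c * F) * b) = A / F * b" by simp

lemma HH_nth: "HH k $ m = fact (m+k) / fact m * BB $ (m+k)"
proof (induction k arbitrary: m)
  case 0 then show ?case by (simp add: HH_def)
next
  case (Suc k)
  have "HH (Suc k) $ m = of_nat (m+1) * HH k $ (m+1)" by (simp add: HH_Suc)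
  also have "\<dots> = of_nat (m+1) * (fact (m+1+k) / fact (m+1) * BB $ (m+1+k))" using Suc by simp
  also have "\<dots> = fact (m + Suc k) / fact m * BB $ (m + Suc k)"
    using aux[of "of_nat (m+1)" "fact (m+1+k)" "fact m" "BB $ (m+1+k)"] by simp
  finally show ?case .
qed

lemma BB_ev: "BB $ (2*n) = cauchy2 n / fact (2*n)"
  by (simp add: cauchy2_def BB_def uu_def yy_def)

lemma HH_ev: "HH (2*j) $ (2*l) = cauchy2 (l+j) / fact (2*l)"
proof -
  have "HH (2*j) $ (2*l) = fact (2*(l+j)) / fact (2*l) * BB $ (2*(l+j))"
    unfolding HH_nth by (simp add: algebra_simps)
  moreover have "BB $ (2*l+2*j) = cauchy2 (l+j) / fact (2*l+2*j)" using BB_ev[of "l+j"] by (simp add: algebra_simps)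
  ultimately show ?thesis by (simp add: algebra_simps)
qed

lemma HH_odd: "HH (2*j) $ (2*l+1) = 0"
proof -
  have "BB $ (2*l+1+2*j) = 0" using BB_odd[of "l+j"] by (simp add: algebra_simps)
  then show ?thesis unfolding HH_nth by simp
qed

lemma sum_even: "(\<Sum>i=0..2*(n::nat). f i) = (\<Sum>l\<le>n. f (2*l)) + (\<Sum>l<n. f (2*l+1))"
proof (induction n)
  case 0 then show ?case by simp
next
  case (Suc n)
  have "{0..2*Suc n} = insert (Suc (Suc (2*n))) (insert (Suc (2*n)) {0..2*n})" by auto
  then have "(\<Sum>i=0..2*Suc n. f i) = f (2*n+2) + f (2*n+1) + (\<Sum>i=0..2*n. f i)"
    by (simp add: add.assoc)
  then show ?case using Suc by (simp add: algebra_simps)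
qed

lemma even_prod:
  fixes F G :: "real fps"
  assumes "\<And>k. F $ (2*k+1) = 0"
  shows "(F * G) $ (2*n) = (\<Sum>l\<le>n. F $ (2*l) * G $ (2*(n-l)))"
proof -
  have "(F * G) $ (2*n) = (\<Sum>i=0..2*n. F$i * G$(2*n-i))" by (rule fps_mult_nth)
  also have "\<dots> = (\<Sum>l\<le>n. F $ (2*l) * G $ (2*n-2*l))" using assms unfolding sum_even by simp
  also have "\<dots> = (\<Sum>l\<le>n. F $ (2*l) * G $ (2*(n-l)))" by (simp add: right_diff_distrib')
  finally show ?thesis .
qed

lemma HH_dd: "fps_deriv (HH 0) = HH 1" "fps_deriv (HH 1) = HH 2" "fps_deriv (HH 2) = HH 3"
  "fps_deriv (HH 3) = HH 4" "fps_deriv (HH 4) = HH 5" "fps_deriv (HH (Suc 0)) = HH 2"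
  using HH_Suc[of 0] HH_Suc[of 1] HH_Suc[of 2] HH_Suc[of 3] HH_Suc[of 4] by (simp_all add: numeral_eq_Suc)

lemma th1: "theta (HH 0) = fps_X * HH 1" by (simp add: theta_def HH_dd)
lemma th2: "theta (theta (HH 0)) = fps_X * HH 1 + fps_X^2 * HH 2"
  apply (simp add: theta_def HH_dd)
  apply algebra
  done
lemma th3: "theta (theta (theta (HH 0))) = fps_X * HH 1 + 3 * fps_X^2 * HH 2 + fps_X^3 * HH 3"
  apply (simp add: theta_def HH_dd fps_deriv_power')
  apply algebra
  done

definition "MB = 20 * theta (theta (theta (HH 0))) - 55 * theta (theta (HH 0)) + 36 * theta (HH 0) - HH 0"

lemma yy_nz: "yy \<noteq> 0" using yy1 by auto

lemma MI: "30 * (HH 2 * HH 2) = 5 * HH 4 * theta PP + theta (HH 4) * PP + 5 * HH 4 * PP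
   - 10 * ((3 * theta (HH 2) + HH 2) * TT) - MB * TT"
proof -
  have k: "yy^6 * (30 * (HH 2 * HH 2)) = yy^6 * (5*HH 4*(fps_X*(-(2*fps_X*ww - (1+fps_X^2)*fps_X*ww^3))) + (fps_X*HH 5)*(-((1+fps_X^2)*ww)) + 5*HH 4*(-((1+fps_X^2)*ww))
      - 10*((3*(fps_X*HH 3)+HH 2)*ww^3)
      - (20*(fps_X*HH 1 + 3*fps_X^2*HH 2 + fps_X^3*HH 3) - 55*(fps_X*HH 1 + fps_X^2*HH 2) + 36*(fps_X*HH 1) - HH 0)*ww^3)"
    by (rule key_alg[OF rel q0 q1 q2 q3 q4 q5])
  have "30 * (HH 2 * HH 2) = 5*HH 4*(fps_X*(-(2*fps_X*ww - (1+fps_X^2)*fps_X*ww^3))) + (fps_X*HH 5)*(-((1+fps_X^2)*ww)) + 5*HH 4*(-((1+fps_X^2)*ww))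
      - 10*((3*(fps_X*HH 3)+HH 2)*ww^3)
      - (20*(fps_X*HH 1 + 3*fps_X^2*HH 2 + fps_X^3*HH 3) - 55*(fps_X*HH 1 + fps_X^2*HH 2) + 36*(fps_X*HH 1) - HH 0)*ww^3"
    using k yy_nz by simp
  also have "\<dots> = 5 * HH 4 * theta PP + theta (HH 4) * PP + 5 * HH 4 * PP
   - 10 * ((3 * theta (HH 2) + HH 2) * TT) - MB * TT"
    unfolding MB_def th1 th2 th3
    apply (simp add: theta_def PP_deriv HH_dd TT_def PP_def ww_deriv fps_deriv_power')
    apply algebra
    done
  finally show ?thesis .
qed



lemma HH4_ev: "HH 4 $ (2*l) = cauchy2 (l+2) / fact (2*l)" using HH_ev[of 2 l] by simp
lemma HH2_ev: "HH 2 $ (2*l) = cauchy2 (l+1) / fact (2*l)" using HH_ev[of 1 l] by simp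
lemma HH4_odd: "HH 4 $ (2*l+1) = 0" using HH_odd[of 2 l] by simp
lemma HH2_odd: "HH 2 $ (2*l+1) = 0" using HH_odd[of 1 l] by simp
lemma BB_odd': "HH 0 $ (2*l+1) = 0" using BB_odd[of l] by (simp add: HH_def)
lemma HH0_ev: "HH 0 $ (2*l) = cauchy2 l / fact (2*l)" using BB_ev[of l] by (simp add: HH_def)

lemma MB_nth: "MB $ m = (20 * real m^3 - 55 * real m^2 + 36 * real m - 1) * HH 0 $ m"
  unfolding MB_def fps_sub_nth fps_add_nth num_nth theta_nth
  by (simp add: algebra_simps power2_eq_square power3_eq_cube)

lemma t1: "f \<noteq> 0 \<Longrightarrow> p \<noteq> 0 \<Longrightarrow> q \<noteq> 0 \<Longrightarrow>
  5*((c/f)*(real (2*k)*((s*d)/(p*q)))) + real (2*l)*(c/f)*((s*d)/(p*q)) + 5*((c/f)*((s*d)/(p*q)))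
  = s*(10*(real l + real k) - 8*real l + 5)*d/(p*q*f)*c"
  by (simp add: field_simps)

lemma S1: "(5 * HH 4 * theta PP + theta (HH 4) * PP + 5 * HH 4 * PP) $ (2*n) =
  (\<Sum>l\<le>n. (-1)^(n-l) * (10*real n - 8*real l + 5)
        * odd_dfact (2*int n - 2*int l - 3) / (2^(n-l) * fact (n-l) * fact (2*l)) * cauchy2 (l+2))"
proof -
  have o1: "(theta (HH 4)) $ (2*k+1) = 0" for k using HH4_odd[of k] by (simp add: theta_nth)
  have "(5 * HH 4 * theta PP + theta (HH 4) * PP + 5 * HH 4 * PP) $ (2*n)
     = 5 * (HH 4 * theta PP) $ (2*n) + (theta (HH 4) * PP) $ (2*n) + 5 * (HH 4 * PP) $ (2*n)"
    by (simp add: mult.assoc num_nth)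
  also have "\<dots> = (\<Sum>l\<le>n. 5 * (HH 4 $ (2*l) * theta PP $ (2*(n-l))) + theta (HH 4) $ (2*l) * PP $ (2*(n-l))
        + 5 * (HH 4 $ (2*l) * PP $ (2*(n-l))))"
    unfolding even_prod[of "HH 4", OF HH4_odd] even_prod[of "theta (HH 4)", OF o1]
    by (simp add: sum.distrib sum_distrib_left)
  also have "\<dots> = (\<Sum>l\<le>n. (-1)^(n-l) * (10*real n - 8*real l + 5)
        * odd_dfact (2*int n - 2*int l - 3) / (2^(n-l) * fact (n-l) * fact (2*l)) * cauchy2 (l+2))"
  proof (rule sum.cong[OF refl])
    fix l assume "l \<in> {..n}"
    then obtain k where nk: "n = l + k" by (metis atMost_iff le_Suc_ex)
    have i: "2 * int n - 2 * int l - 3 = 2 * int k - 3" using nk by simp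
    show "5 * (HH 4 $ (2*l) * theta PP $ (2*(n-l))) + theta (HH 4) $ (2*l) * PP $ (2*(n-l))
        + 5 * (HH 4 $ (2*l) * PP $ (2*(n-l))) = (-1)^(n-l) * (10*real n - 8*real l + 5)
        * odd_dfact (2*int n - 2*int l - 3) / (2^(n-l) * fact (n-l) * fact (2*l)) * cauchy2 (l+2)"
      unfolding theta_nth HH4_ev PP_coeff i using t1[of "fact (2*l)" "2^k" "fact k"] nk by simp
  qed
  finally show ?thesis .
qed

lemma S2: "((3 * theta (HH 2) + HH 2) * TT) $ (2*n) =
  (\<Sum>l\<le>n. (-1)^(n-l) * (6*real l + 1)
        * odd_dfact (2*int n - 2*int l + 1) / (2^(n-l) * fact (n-l) * fact (2*l)) * cauchy2 (l+1))"
proof -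
  have g: "(3 * theta (HH 2) + HH 2) $ m = (3 * real m + 1) * HH 2 $ m" for m
    by (simp add: num_nth theta_nth algebra_simps)
  have o1: "(3 * theta (HH 2) + HH 2) $ (2*k+1) = 0" for k using HH2_odd[of k] g[of "2*k+1"] by simp
  have "((3 * theta (HH 2) + HH 2) * TT) $ (2*n) = (\<Sum>l\<le>n. (3 * theta (HH 2) + HH 2) $ (2*l) * TT $ (2*(n-l)))"
    by (rule even_prod[OF o1])
  also have "\<dots> = (\<Sum>l\<le>n. (-1)^(n-l) * (6*real l + 1)
        * odd_dfact (2*int n - 2*int l + 1) / (2^(n-l) * fact (n-l) * fact (2*l)) * cauchy2 (l+1))"
  proof (rule sum.cong[OF refl])
    fix l assume "l \<in> {..n}"
    then obtain k where nk: "n = l + k" by (metis atMost_iff le_Suc_ex)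
    have i: "2 * int n - 2 * int l + 1 = 2 * int k + 1" using nk by simp
    show "(3 * theta (HH 2) + HH 2) $ (2*l) * TT $ (2*(n-l)) = (-1)^(n-l) * (6*real l + 1)
        * odd_dfact (2*int n - 2*int l + 1) / (2^(n-l) * fact (n-l) * fact (2*l)) * cauchy2 (l+1)"
      unfolding g HH2_ev TT_coeff i using nk by (simp add: field_simps)
  qed
  finally show ?thesis .
qed

lemma S3: "(MB * TT) $ (2*n) =
  (\<Sum>l\<le>n. (-1)^(n-l)
        * (160*real l^3 - 220*real l^2 + 72*real l - 1)
        * odd_dfact (2*int n - 2*int l + 1) / (2^(n-l) * fact (n-l) * fact (2*l)) * cauchy2 l)"
proof -
  have o1: "MB $ (2*k+1) = 0" for k using BB_odd'[of k] MB_nth[of "2*k+1"] by simp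
  have "(MB * TT) $ (2*n) = (\<Sum>l\<le>n. MB $ (2*l) * TT $ (2*(n-l)))"
    by (rule even_prod[OF o1])
  also have "\<dots> = (\<Sum>l\<le>n. (-1)^(n-l)
        * (160*real l^3 - 220*real l^2 + 72*real l - 1)
        * odd_dfact (2*int n - 2*int l + 1) / (2^(n-l) * fact (n-l) * fact (2*l)) * cauchy2 l)"
  proof (rule sum.cong[OF refl])
    fix l assume "l \<in> {..n}"
    then obtain k where nk: "n = l + k" by (metis atMost_iff le_Suc_ex)
    have i: "2 * int n - 2 * int l + 1 = 2 * int k + 1" using nk by simp
    have p: "20 * real (2*l)^3 - 55 * real (2*l)^2 + 36 * real (2*l) - 1 = 160*real l^3 - 220*real l^2 + 72*real l - 1"
      by (simp add: power_mult_distrib)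
    show "MB $ (2*l) * TT $ (2*(n-l)) = (-1)^(n-l)
        * (160*real l^3 - 220*real l^2 + 72*real l - 1)
        * odd_dfact (2*int n - 2*int l + 1) / (2^(n-l) * fact (n-l) * fact (2*l)) * cauchy2 l"
      unfolding MB_nth p HH0_ev TT_coeff i using nk by (simp add: field_simps)
  qed
  finally show ?thesis .
qed

lemma LHS: "cauchy2_conv2 1 1 n = fact (2*n) * (HH 2 * HH 2) $ (2*n)"
proof -
  have "(HH 2 * HH 2) $ (2*n) = (\<Sum>l\<le>n. HH 2 $ (2*l) * HH 2 $ (2*(n-l)))"
    by (rule even_prod[OF HH2_odd])
  then have "fact (2*n) * (HH 2 * HH 2) $ (2*n) = (\<Sum>l\<le>n. fact (2*n) * (HH 2 $ (2*l) * HH 2 $ (2*(n-l))))"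
    by (simp add: sum_distrib_left)
  also have "\<dots> = cauchy2_conv2 1 1 n"
    unfolding cauchy2_conv2_def HH2_ev
    by (intro sum.cong refl) (simp add: field_simps)
  finally show ?thesis by simp
qed

lemma fin:
  assumes "30 * (L::real) = a - 10*b - c"
  shows "N*L = N/30*a - N/3*b - N/30*c"
proof -
  have "a = 30*L + 10*b + c" using assms by simp
  then show ?thesis by (simp add: field_simps)
qed

theorem theorem4:
  fixes n :: nat
  shows "cauchy2_conv2 1 1 n =
     fact (2*n) / 30 * (\<Sum>l\<le>n. (-1)^(n-l) * (10*real n - 8*real l + 5)
        * odd_dfact (2*int n - 2*int l - 3) / (2^(n-l) * fact (n-l) * fact (2*l)) * cauchy2 (l+2))
   - fact (2*n) / 3 * (\<Sum>l\<le>n. (-1)^(n-l) * (6*real l + 1)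
        * odd_dfact (2*int n - 2*int l + 1) / (2^(n-l) * fact (n-l) * fact (2*l)) * cauchy2 (l+1))
   - fact (2*n) / 30 * (\<Sum>l\<le>n. (-1)^(n-l)
        * (160*real l^3 - 220*real l^2 + 72*real l - 1)
        * odd_dfact (2*int n - 2*int l + 1) / (2^(n-l) * fact (n-l) * fact (2*l)) * cauchy2 l)"
proof -
  have M: "30 * (HH 2 * HH 2) $ (2*n) = (5 * HH 4 * theta PP + theta (HH 4) * PP + 5 * HH 4 * PP) $ (2*n)
     - 10 * ((3 * theta (HH 2) + HH 2) * TT) $ (2*n) - (MB * TT) $ (2*n)"
    using arg_cong[OF MI, of "\<lambda>F. F $ (2*n)"] by (simp only: fps_sub_nth num_nth)
  show ?thesis unfolding S1[symmetric] S2[symmetric] S3[symmetric] LHS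
    by (rule fin[OF M])
qed


end
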